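(* Let $n\ge 1$, let $b\in B_n\cong\mathrm{MCG}(D^2\setminus\{p_1,\dots,p_n\},\partial D^2)$, and let $\tau\in\mathrm{MCG}(D^2\setminus\{p_1,\dots,p_n\})$ be an orientation-reversing involution (i.e. $\tau$ reverses orientation and $\tau^2=\mathrm{Id}$). Set $b^*=\tau b\tau$. Then the closure of the braid $bb^*$ is a knot (i.e. has exactly one component) if and only if $n$ is odd and $\pi(b\tau)$ is an $n$-cycle, where $\pi$ denotes the canonical map to the symmetric group $S_n$ recording the induced permutation of the punctures $p_1,\dots,p_n$.
   Context: Braids are viewed as mapping classes of the $n$-punctured disc relative to the boundary; the mapping class group $\mathrm{MCG}(D^2\setminus\{p_1,\dots,p_n\})$ (not relative to the boundary) acts on $B_n$ by conjugation, which is how $b^*=\tau b\tau$ is regarded as a braid. *)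

theory Defs
  imports "HOL-Complex_Analysis.Complex_Analysis"
begin

text \<open>Model: the disc D^2 is the closed unit disc in the complex plane, the punctures
form a finite set P of interior points. Mapping classes are represented by homeomorphisms
of the closed disc preserving P setwise (these are exactly the homeomorphisms of the
punctured disc); braids are those fixing the boundary circle pointwise.\<close>

abbreviation disc :: "complex set" where "disc \<equiv> cball 0 1"

definition is_homeo :: "(complex \<Rightarrow> complex) \<Rightarrow> bool" where
  "is_homeo f \<longleftrightarrow> (\<exists>g. homeomorphism disc disc f g)"

definition mcg_rep :: "complex set \<Rightarrow> (complex \<Rightarrow> complex) \<Rightarrow> bool" where
  "mcg_rep P f \<longleftrightarrow> is_homeo f \<and> f ` P = P"

definition braid_rep :: "complex set \<Rightarrow> (complex \<Rightarrow> complex) \<Rightarrow> bool" where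
  "braid_rep P f \<longleftrightarrow> mcg_rep P f \<and> (\<forall>z\<in>sphere 0 1. f z = z)"

definition mcg_isotopic :: "complex set \<Rightarrow> (complex \<Rightarrow> complex) \<Rightarrow> (complex \<Rightarrow> complex) \<Rightarrow> bool" where
  "mcg_isotopic P f g \<longleftrightarrow>
     (\<exists>H :: real \<times> complex \<Rightarrow> complex.
        continuous_on ({0..1} \<times> disc) H \<and>
        (\<forall>t\<in>{0..1}. mcg_rep P (\<lambda>z. H (t, z))) \<and>
        (\<forall>z\<in>disc. H (0, z) = f z \<and> H (1, z) = g z))"

text \<open>Orientation reversing: the induced map on the boundary circle has degree -1.\<close>
definition orientation_reversing :: "(complex \<Rightarrow> complex) \<Rightarrow> bool" where
  "orientation_reversing h \<longleftrightarrow> winding_number (h \<circ> circlepath 0 1) 0 = -1"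

text \<open>Standard embedding of disc x [0,1] (with ends glued) as a solid torus in R^3.\<close>
definition solid_torus_emb :: "complex \<Rightarrow> real \<Rightarrow> real \<times> real \<times> real" where
  "solid_torus_emb z t =
     ((2 + Re z) * cos (2 * pi * t), (2 + Re z) * sin (2 * pi * t), Im z)"

text \<open>An isotopy of the disc (ignoring punctures) from the identity to g; its traces
of the punctures form a geometric braid representing g.\<close>
definition disc_isotopy_from_id :: "(complex \<Rightarrow> complex) \<Rightarrow> (real \<times> complex \<Rightarrow> complex) \<Rightarrow> bool" where
  "disc_isotopy_from_id g H \<longleftrightarrow>
     continuous_on ({0..1} \<times> disc) H \<and>
     (\<forall>t\<in>{0..1}. is_homeo (\<lambda>z. H (t, z))) \<and>
     (\<forall>z\<in>disc. H (0, z) = z \<and> H (1, z) = g z)"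

definition closed_braid :: "complex set \<Rightarrow> (real \<times> complex \<Rightarrow> complex) \<Rightarrow> (real \<times> real \<times> real) set" where
  "closed_braid P H = (\<lambda>(t, p). solid_torus_emb (H (t, p)) t) ` ({0..1} \<times> P)"

definition closure_is_knot :: "complex set \<Rightarrow> (complex \<Rightarrow> complex) \<Rightarrow> bool" where
  "closure_is_knot P g \<longleftrightarrow>
     (\<forall>H. disc_isotopy_from_id g H \<longrightarrow>
        closed_braid P H \<noteq> {} \<and> connected (closed_braid P H))"

definition is_full_cycle_on :: "complex set \<Rightarrow> (complex \<Rightarrow> complex) \<Rightarrow> bool" where
  "is_full_cycle_on P \<sigma> \<longleftrightarrow>
     (\<exists>cs. distinct cs \<and> set cs = P \<and>
        (\<forall>i<length cs. \<sigma> (cs ! i) = cs ! (Suc i mod length cs)))"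

end

theory Submission
  imports Defs
begin

definition sorb :: "complex set \<Rightarrow> (complex \<Rightarrow> complex) \<Rightarrow> bool" where
  "sorb P \<sigma> \<longleftrightarrow> (\<forall>p\<in>P. \<forall>q\<in>P. \<exists>m. (\<sigma>^^m) p = q)"

lemma funpow_in: "\<sigma> ` P \<subseteq> P \<Longrightarrow> p \<in> P \<Longrightarrow> (\<sigma>^^m) p \<in> P"
  by (induction m) auto

lemma funpow_period:
  assumes "(\<sigma>^^d) p = p" shows "(\<sigma>^^m) p = (\<sigma>^^(m mod d)) p"
proof -
  have k: "(\<sigma>^^(d*k)) p = p" for k
  proof (induction k)
    case (Suc k)
    have "d * Suc k = d * k + d" by simp
    then show ?case using Suc assms by (simp only: funpow_add o_def)
  qed simp
  have "m = m mod d + d * (m div d)" by simp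
  then have "(\<sigma>^^m) p = (\<sigma>^^(m mod d)) ((\<sigma>^^(d * (m div d))) p)"
    by (metis funpow_add o_apply)
  then show ?thesis using k by simp
qed

lemma funpow_inj:
  assumes "\<sigma> ` P \<subseteq> P" "inj_on \<sigma> P"
  shows "x \<in> P \<Longrightarrow> y \<in> P \<Longrightarrow> (\<sigma>^^m) x = (\<sigma>^^m) y \<Longrightarrow> x = y"
proof (induction m)
  case (Suc m)
  then show ?case using assms funpow_in[OF assms(1)] by (auto simp: inj_on_def)
qed simp

lemma orbit_lemma:
  assumes fin: "finite P" and im: "\<sigma> ` P \<subseteq> P" and inj: "inj_on \<sigma> P" and so: "sorb P \<sigma>"
    and p: "p \<in> P"
  shows "inj_on (\<lambda>i. (\<sigma>^^i) p) {..<card P} \<and> (\<sigma>^^(card P)) p = p"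
proof -
  let ?n = "card P"
  have shift: "(\<sigma>^^(j - i)) p = p" if "i \<le> j" "(\<sigma>^^i) p = (\<sigma>^^j) p" for i j
  proof -
    have "(\<sigma>^^j) p = (\<sigma>^^i) ((\<sigma>^^(j - i)) p)"
      using that by (metis funpow_add le_add_diff_inverse o_apply)
    then show ?thesis using that funpow_inj[OF im inj] funpow_in[OF im] p by metis
  qed
  have injn: "inj_on (\<lambda>i. (\<sigma>^^i) p) {..<?n}"
  proof (rule ccontr)
    assume "\<not> ?thesis"
    then obtain i j where ij: "i < j" "j < ?n" "(\<sigma>^^i) p = (\<sigma>^^j) p"
      unfolding inj_on_def by (metis lessThan_iff linorder_neqE_nat)
    define d where "d = j - i"
    have d: "0 < d" "d < ?n" "(\<sigma>^^d) p = p" using ij shift unfolding d_def by auto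
    have "P \<subseteq> (\<lambda>m. (\<sigma>^^m) p) ` {..<d}"
    proof
      fix q assume "q \<in> P"
      then obtain m where "(\<sigma>^^m) p = q" using so p unfolding sorb_def by blast
      then have "q = (\<sigma>^^(m mod d)) p" using funpow_period[OF d(3)] by simp
      moreover have "m mod d < d" using d by simp
      ultimately show "q \<in> (\<lambda>m. (\<sigma>^^m) p) ` {..<d}" by blast
    qed
    then have "?n \<le> card ((\<lambda>m. (\<sigma>^^m) p) ` {..<d})" by (simp add: card_mono)
    also have "\<dots> \<le> d" using card_image_le[of "{..<d}"] by simp
    finally show False using d by simp
  qed
  have sub: "(\<lambda>i. (\<sigma>^^i) p) ` {..<?n} \<subseteq> P" using funpow_in[OF im] p by auto
  have "card ((\<lambda>i. (\<sigma>^^i) p) ` {..<?n}) = ?n" using card_image[OF injn] by simp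
  then have eq: "(\<lambda>i. (\<sigma>^^i) p) ` {..<?n} = P" using card_subset_eq[OF fin sub] by simp
  have "(\<sigma>^^?n) p \<in> P" using funpow_in[OF im] p by simp
  then obtain i where i: "i < ?n" "(\<sigma>^^?n) p = (\<sigma>^^i) p" using eq by force
  have "(\<sigma>^^(?n - i)) p = p" using shift[of i ?n] i by simp
  then have "i = 0"
  proof -
    assume a: "(\<sigma>^^(?n - i)) p = p"
    show "i = 0"
    proof (rule ccontr)
      assume "i \<noteq> 0"
      then have "?n - i \<in> {..<?n}" "0 \<in> {..<?n}" using i by auto
      moreover have "(\<sigma>^^(?n - i)) p = (\<sigma>^^0) p" using a by simp
      ultimately have "?n - i = 0" using injn unfolding inj_on_def by blast
      then show False using i \<open>i \<noteq> 0\<close> by simp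
    qed
  qed
  then show ?thesis using injn i by simp
qed

lemma full_cycle_iff:
  assumes fin: "finite P" and ne: "P \<noteq> {}" and im: "\<sigma> ` P \<subseteq> P" and inj: "inj_on \<sigma> P"
  shows "is_full_cycle_on P \<sigma> \<longleftrightarrow> sorb P \<sigma>"
proof
  assume "is_full_cycle_on P \<sigma>"
  then obtain cs where cs: "distinct cs" "set cs = P"
     "\<And>i. i<length cs \<Longrightarrow> \<sigma> (cs ! i) = cs ! (Suc i mod length cs)"
    unfolding is_full_cycle_on_def by blast
  let ?n = "length cs"
  have npos: "?n > 0" using cs ne by auto
  have it: "(\<sigma>^^m) (cs ! i) = cs ! ((i + m) mod ?n)" if "i < ?n" for i m
  proof (induction m)
    case 0 then show ?case using that by simp
  next
    case (Suc m)
    have "(\<sigma>^^Suc m) (cs ! i) = \<sigma> (cs ! ((i + m) mod ?n))" using Suc by simp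
    also have "\<dots> = cs ! (Suc ((i + m) mod ?n) mod ?n)" using cs(3) npos by simp
    also have "Suc ((i + m) mod ?n) mod ?n = (i + Suc m) mod ?n" by (simp add: mod_Suc_eq)
    finally show ?case .
  qed
  show "sorb P \<sigma>" unfolding sorb_def
  proof (intro ballI)
    fix p q assume "p \<in> P" "q \<in> P"
    then obtain i j where "i < ?n" "j < ?n" "p = cs ! i" "q = cs ! j"
      using cs(2) by (metis in_set_conv_nth)
    moreover have "(i + (j + ?n - i)) mod ?n = j" using \<open>i < ?n\<close> \<open>j < ?n\<close> by simp
    ultimately show "\<exists>m. (\<sigma>^^m) p = q" using it by metis
  qed
next
  assume so: "sorb P \<sigma>"
  obtain p where p: "p \<in> P" using ne by blast
  let ?n = "card P"
  note L = orbit_lemma[OF fin im inj so p]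
  define cs where "cs = map (\<lambda>i. (\<sigma>^^i) p) [0..<?n]"
  have len: "length cs = ?n" unfolding cs_def by simp
  have "distinct cs" unfolding cs_def using L by (simp add: distinct_map lessThan_atLeast0)
  moreover have "set cs = P"
  proof -
    have sub: "set cs \<subseteq> P" unfolding cs_def using funpow_in[OF im] p by auto
    have "card (set cs) = ?n" using \<open>distinct cs\<close> len distinct_card by metis
    then show ?thesis using card_subset_eq[OF fin sub] by simp
  qed
  moreover have "\<forall>i<length cs. \<sigma> (cs ! i) = cs ! (Suc i mod length cs)"
  proof (intro allI impI)
    fix i assume i: "i < length cs"
    have "\<sigma> (cs ! i) = (\<sigma>^^Suc i) p" using i len unfolding cs_def by simp
    moreover have "cs ! (Suc i mod length cs) = (\<sigma>^^Suc i) p"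
    proof (cases "Suc i < ?n")
      case True then show ?thesis using len unfolding cs_def by simp
    next
      case False
      then have "Suc i = ?n" using i len by simp
      then show ?thesis using L len i unfolding cs_def by simp
    qed
    ultimately show "\<sigma> (cs ! i) = cs ! (Suc i mod length cs)" by simp
  qed
  ultimately show "is_full_cycle_on P \<sigma>" unfolding is_full_cycle_on_def by blast
qed

lemma sq_orbit:
  assumes fin: "finite P" and ne: "P \<noteq> {}" and im: "\<sigma> ` P \<subseteq> P" and inj: "inj_on \<sigma> P"
  shows "sorb P (\<sigma> \<circ> \<sigma>) \<longleftrightarrow> odd (card P) \<and> sorb P \<sigma>"
proof -
  let ?n = "card P"
  have pw: "((\<sigma> \<circ> \<sigma>)^^m) = \<sigma>^^(2*m)" for m
  proof -
    have "\<sigma> \<circ> \<sigma> = \<sigma>^^2" by (simp add: numeral_2_eq_2)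
    then show ?thesis by (simp add: funpow_mult mult.commute)
  qed
  have npos: "?n > 0" using fin ne by (simp add: card_gt_0_iff)
  show ?thesis
  proof
    assume so2: "sorb P (\<sigma> \<circ> \<sigma>)"
    then have so: "sorb P \<sigma>" unfolding sorb_def pw by metis
    have "odd ?n"
    proof
      assume ev: "even ?n"
      then have n2: "?n \<ge> 2" using npos by presburger
      obtain p where p: "p \<in> P" using ne by blast
      note L = orbit_lemma[OF fin im inj so p]
      have "\<sigma> p \<in> P" using im p by blast
      then obtain m where m: "(\<sigma>^^(2*m)) p = \<sigma> p" using so2 p unfolding sorb_def pw by blast
      have "(\<sigma>^^(2*m mod ?n)) p = (\<sigma>^^1) p" using m funpow_period[OF L[THEN conjunct2]] by simp
      moreover have "2*m mod ?n < ?n" "(1::nat) < ?n" using npos n2 by auto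
      ultimately have "2*m mod ?n = 1" using L[THEN conjunct1] unfolding inj_on_def by blast
      moreover have "even (2*m mod ?n)" using ev by (metis dvd_mod dvd_triv_left)
      ultimately show False by simp
    qed
    then show "odd ?n \<and> sorb P \<sigma>" using so by simp
  next
    assume a: "odd ?n \<and> sorb P \<sigma>"
    show "sorb P (\<sigma> \<circ> \<sigma>)" unfolding sorb_def pw
    proof (intro ballI)
      fix p q assume p: "p \<in> P" and q: "q \<in> P"
      obtain j where j: "(\<sigma>^^j) p = q" using a p q unfolding sorb_def by blast
      note L = orbit_lemma[OF fin im inj a[THEN conjunct2] p]
      define m where "m = j * ((?n + 1) div 2)"
      have "odd ?n" using a by simp
      then have h2: "2*((?n+1) div 2) = ?n+1" by (metis odd_two_times_div_two_succ add.commute dvd_add_triv_right_iff dvd_mult_div_cancel odd_even_add odd_one)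
      have "2 * m = j * (?n + 1)" unfolding m_def using h2 by (metis mult.left_commute)
      then have "2 * m = j * ?n + j" by simp
      then have "2 * m mod ?n = j mod ?n" by simp
      then have "(\<sigma>^^(2*m)) p = q" using j funpow_period[OF L[THEN conjunct2]] by metis
      then show "\<exists>m. (\<sigma>^^(2*m)) p = q" by blast
    qed
  qed
qed

lemma emb_one: "solid_torus_emb z 1 = solid_torus_emb z 0"
  by (simp add: solid_torus_emb_def)

lemma emb_inj:
  assumes z: "norm z \<le> 1" and w: "norm w \<le> 1" and t: "t \<in> {0..1}" and s: "s \<in> {0..1}"
    and eq: "solid_torus_emb z t = solid_torus_emb w s"
  shows "z = w \<and> (t = s \<or> (t = 0 \<and> s = 1) \<or> (t = 1 \<and> s = 0))"
proof -
  define r1 where "r1 = 2 + Re z"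
  define r2 where "r2 = 2 + Re w"
  define a where "a = 2 * pi * t"
  define b where "b = 2 * pi * s"
  have r1: "r1 \<ge> 1" using abs_Re_le_cmod[of z] z unfolding r1_def by linarith
  have r2: "r2 \<ge> 1" using abs_Re_le_cmod[of w] w unfolding r2_def by linarith
  have e1: "r1 * cos a = r2 * cos b" and e2: "r1 * sin a = r2 * sin b" and e3: "Im z = Im w"
    using eq by (simp_all add: solid_torus_emb_def r1_def r2_def a_def b_def)
  have "r1^2 = (r1 * cos a)^2 + (r1 * sin a)^2"
    by (simp add: power_mult_distrib flip: distrib_left)
  also have "\<dots> = (r2 * cos b)^2 + (r2 * sin b)^2" using e1 e2 by simp
  also have "\<dots> = r2^2" by (simp add: power_mult_distrib flip: distrib_left)
  finally have "r1 = r2" using r1 r2 by (simp add: power2_eq_iff)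
  then have zw: "z = w" using e3 unfolding r1_def r2_def by (simp add: complex_eqI)
  have ca: "cos a = cos b" and sa: "sin a = sin b" using e1 e2 \<open>r1 = r2\<close> r1 by auto
  have "cis a = cis b" using ca sa by (simp add: complex_eq_iff)
  then have "exp (\<i> * of_real a) = exp (\<i> * of_real b)" by (simp add: cis_conv_exp)
  then obtain n :: int where "\<i> * of_real a = \<i> * of_real b + (of_int (2 * n) * pi) * \<i>"
    using exp_eq by blast
  then have "a = b + 2 * n * pi" by (simp add: complex_eq_iff)
  then have "2 * pi * t = 2 * pi * (s + n)" unfolding a_def b_def by (simp add: algebra_simps)
  then have tsn: "t = s + n" by simp
  have "n \<ge> -1" "n \<le> 1" using t s tsn by auto
  then have "n = -1 \<or> n = 0 \<or> n = 1" by auto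
  then have "t = s \<or> (t = 0 \<and> s = 1) \<or> (t = 1 \<and> s = 0)" using tsn t s by auto
  with zw show ?thesis by simp
qed

lemma braid_conn:
  assumes fin: "finite P" and sub: "P \<subseteq> disc" and ne: "P \<noteq> {}"
    and iso: "disc_isotopy_from_id g H" and im: "g ` P \<subseteq> P" and inj: "inj_on g P"
  shows "connected (closed_braid P H) \<longleftrightarrow> sorb P g"
proof -
  have Hc: "continuous_on ({0..1} \<times> disc) H"
    and Hh: "\<And>t. t \<in> {0..1} \<Longrightarrow> is_homeo (\<lambda>z. H (t, z))"
    and H0: "\<And>z. z \<in> disc \<Longrightarrow> H (0, z) = z"
    and H1: "\<And>z. z \<in> disc \<Longrightarrow> H (1, z) = g z"
    using iso unfolding disc_isotopy_from_id_def by auto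
  have Hd: "H (t, z) \<in> disc" if "t \<in> {0..1}" "z \<in> disc" for t z
    using Hh[OF that(1)] that(2) unfolding is_homeo_def homeomorphism_def by blast
  have Hinj: "z = w" if "t \<in> {0..1}" "z \<in> disc" "w \<in> disc" "H (t, z) = H (t, w)" for t z w
    using Hh[OF that(1)] that(2-4) unfolding is_homeo_def homeomorphism_def by metis
  define \<gamma> where "\<gamma> p t = solid_torus_emb (H (t, p)) t" for p t
  have cH: "continuous_on {0..1} (\<lambda>t. H (t, p))" if "p \<in> disc" for p
    by (rule continuous_on_compose2[OF Hc, of "{0..1}" "\<lambda>t. (t, p)"])
       (use that in \<open>auto intro!: continuous_intros\<close>)
  have cg: "continuous_on {0..1} (\<gamma> p)" if "p \<in> disc" for p
    unfolding \<gamma>_def solid_torus_emb_def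
    by (intro continuous_intros cH[OF that])
  have cmp: "compact (\<gamma> p ` {0..1})" if "p \<in> disc" for p
    using cg[OF that] by (intro compact_continuous_image) auto
  have cnn: "connected (\<gamma> p ` {0..1})" if "p \<in> disc" for p
    using cg[OF that] by (intro connected_continuous_image) auto
  have cb: "closed_braid P H = (\<Union>p\<in>P. \<gamma> p ` {0..1})"
  proof
    show "closed_braid P H \<subseteq> (\<Union>p\<in>P. \<gamma> p ` {0..1})"
      unfolding closed_braid_def \<gamma>_def by auto
    show "(\<Union>p\<in>P. \<gamma> p ` {0..1}) \<subseteq> closed_braid P H"
    proof
      fix x assume "x \<in> (\<Union>p\<in>P. \<gamma> p ` {0..1})"
      then obtain p t where "p \<in> P" "t \<in> {0..1}" "x = \<gamma> p t" by blast
      then show "x \<in> closed_braid P H" unfolding closed_braid_def \<gamma>_def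
        by (intro image_eqI[of _ _ "(t, p)"]) auto
    qed
  qed
  have g0: "\<gamma> p 0 = solid_torus_emb p 0" if "p \<in> disc" for p
    using H0[OF that] unfolding \<gamma>_def by simp
  have g1: "\<gamma> p 1 = solid_torus_emb (g p) 0" if "p \<in> disc" for p
    using H1[OF that] unfolding \<gamma>_def by (simp add: emb_one)
  show ?thesis
  proof
    assume con: "connected (closed_braid P H)"
    show "sorb P g"
    proof (rule ccontr)
      assume "\<not> sorb P g"
      then obtain p q where p: "p \<in> P" and q: "q \<in> P" and nr: "\<And>m. (g^^m) p \<noteq> q"
        unfolding sorb_def by blast
      define A where "A = range (\<lambda>m. (g^^m) p)"
      define B where "B = P - A"
      have AP: "A \<subseteq> P" unfolding A_def using funpow_in[OF im] p by auto
      have finA: "finite A" using AP fin finite_subset by blast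
      have gA: "g ` A \<subseteq> A" unfolding A_def
      proof (rule image_subsetI)
        fix x assume "x \<in> range (\<lambda>m. (g^^m) p)"
        then obtain m where "x = (g^^m) p" by blast
        then have "g x = (g^^Suc m) p" by simp
        then show "g x \<in> range (\<lambda>m. (g^^m) p)" by blast
      qed
      have "card (g ` A) = card A" using card_image inj AP by (metis inj_on_subset)
      then have gAA: "g ` A = A" using card_subset_eq[OF finA gA] by simp
      have gB: "g x \<in> B" if "x \<in> B" for x
      proof -
        have xP: "x \<in> P" "x \<notin> A" using that unfolding B_def by auto
        have "g x \<in> P" using im xP by blast
        moreover have "g x \<notin> A"
        proof
          assume "g x \<in> A"
          then obtain a where "a \<in> A" "g x = g a" using gAA by force
          then have "x = a" using inj xP AP unfolding inj_on_def by blast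
          then show False using xP \<open>a \<in> A\<close> by simp
        qed
        ultimately show ?thesis unfolding B_def by simp
      qed
      have pA: "p \<in> A" unfolding A_def by (metis funpow_0 rangeI)
      have qB: "q \<in> B" unfolding B_def A_def using q nr by auto
      define e1 where "e1 = (\<Union>a\<in>A. \<gamma> a ` {0..1})"
      define e2 where "e2 = (\<Union>b\<in>B. \<gamma> b ` {0..1})"
      have BP: "B \<subseteq> P" unfolding B_def by auto
      have "closed e1" unfolding e1_def using finA AP sub cmp
        by (intro compact_imp_closed compact_UN) auto
      moreover have "closed e2" unfolding e2_def using fin BP sub cmp
        by (intro compact_imp_closed compact_UN) (auto intro: finite_subset)
      moreover have "closed_braid P H \<subseteq> e1 \<union> e2" unfolding cb e1_def e2_def B_def by blast
      moreover have "e1 \<inter> e2 = {}"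
      proof (rule ccontr)
        assume "e1 \<inter> e2 \<noteq> {}"
        then obtain a b t s where ab: "a \<in> A" "b \<in> B" "t \<in> {0..1}" "s \<in> {0..1}"
          "\<gamma> a t = \<gamma> b s" unfolding e1_def e2_def by blast
        have ad: "a \<in> disc" and bd: "b \<in> disc" using ab AP BP sub by auto
        have bA: "b \<notin> A" using ab unfolding B_def by simp
        from emb_inj[of "H (t, a)" "H (s, b)" t s] ab Hd[OF ab(3) ad] Hd[OF ab(4) bd]
        have E: "H (t, a) = H (s, b) \<and> (t = s \<or> (t = 0 \<and> s = 1) \<or> (t = 1 \<and> s = 0))"
          unfolding \<gamma>_def by simp
        show False
        proof -
          { assume "t = s" then have "a = b" using Hinj ab ad bd E by metis
            then have False using ab bA by simp }
          moreover
          { assume "t = 0 \<and> s = 1" then have "a = g b" using E H0 H1 ad bd by metis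
            then have False using gB ab unfolding B_def by auto }
          moreover
          { assume "t = 1 \<and> s = 0" then have "g a = b" using E H0 H1 ad bd by metis
            then have False using gA ab bA by auto }
          ultimately show False using E by blast
        qed
      qed
      moreover have "e1 \<inter> closed_braid P H \<noteq> {}"
      proof -
        have "\<gamma> p 0 \<in> e1" unfolding e1_def using pA by (rule UN_I, intro imageI) simp
        moreover have "\<gamma> p 0 \<in> closed_braid P H" unfolding cb using p by (rule UN_I, intro imageI) simp
        ultimately show ?thesis by blast
      qed
      moreover have "e2 \<inter> closed_braid P H \<noteq> {}"
      proof -
        have "\<gamma> q 0 \<in> e2" unfolding e2_def using qB by (rule UN_I, intro imageI) simp
        moreover have "\<gamma> q 0 \<in> closed_braid P H" unfolding cb using q by (rule UN_I, intro imageI) simp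
        ultimately show ?thesis by blast
      qed
      ultimately show False using con unfolding connected_closed by blast
    qed
  next
    assume so: "sorb P g"
    obtain p0 where p0: "p0 \<in> P" using ne by blast
    let ?S = "closed_braid P H"
    have step: "connected_component ?S (\<gamma> q 0) (\<gamma> q t)" if "q \<in> P" "t \<in> {0..1}" for q t
      unfolding connected_component_def
      using that cnn[of q] sub unfolding cb
      by (intro exI[of _ "\<gamma> q ` {0..1}"]) auto
    have chain: "connected_component ?S (\<gamma> p0 0) (\<gamma> ((g^^m) p0) 0)" for m
    proof (induction m)
      case 0
      have "\<gamma> p0 0 \<in> ?S" using p0 unfolding cb by (rule UN_I, intro imageI) simp
      then show ?case by (simp add: connected_component_refl)
    next
      case (Suc m)
      let ?q = "(g^^m) p0"
      have qP: "?q \<in> P" using funpow_in[OF im p0] .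
      have gq: "g ?q \<in> disc" "?q \<in> disc" using qP im sub by (blast, blast)
      have "\<gamma> ?q 1 = \<gamma> (g ?q) 0" using g1[OF gq(2)] g0[OF gq(1)] by simp
      then have "connected_component ?S (\<gamma> ?q 0) (\<gamma> (g ?q) 0)" using step[OF qP, of 1] by simp
      then show ?case using Suc connected_component_trans by auto
    qed
    have all: "connected_component ?S (\<gamma> p0 0) x" if xS: "x \<in> ?S" for x
    proof -
      obtain q t where qt: "q \<in> P" "t \<in> {0..1}" "x = \<gamma> q t" using xS unfolding cb by blast
      obtain m where "(g^^m) p0 = q" using so p0 qt unfolding sorb_def by blast
      then show ?thesis using chain[of m] step[OF qt(1,2)] qt connected_component_trans by metis
    qed
    show "connected ?S" unfolding connected_iff_connected_component
      using all connected_component_sym connected_component_trans by metis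
  qed
qed

lemma homeo_sphere:
  assumes hk: "homeomorphism disc disc h k" and z: "z \<in> sphere 0 1"
  shows "k z \<in> sphere 0 1"
proof -
  have hc: "continuous_on disc h" and hi: "h ` disc = disc" and kh: "\<And>x. x \<in> disc \<Longrightarrow> k (h x) = x"
    and hk': "\<And>y. y \<in> disc \<Longrightarrow> h (k y) = y" and ki: "k ` disc = disc"
    using hk unfolding homeomorphism_def by auto
  have inj: "inj_on h disc" by (metis inj_on_def kh)
  have "h \<in> interior disc \<rightarrow> interior (h ` disc)"
    by (rule continuous_image_subset_interior[OF hc inj]) simp
  then have int: "h \<in> ball 0 1 \<rightarrow> ball 0 1" using hi by simp
  have zd: "z \<in> disc" using z by simp
  have kd: "k z \<in> disc" using ki zd by blast
  show ?thesis
  proof (rule ccontr)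
    assume "k z \<notin> sphere 0 1"
    then have "k z \<in> ball 0 1" using kd by auto
    then have "h (k z) \<in> ball 0 1" using int by blast
    then show False using hk'[OF zd] z by simp
  qed
qed

definition alex :: "(complex \<Rightarrow> complex) \<Rightarrow> real \<times> complex \<Rightarrow> complex" where
  "alex g = (\<lambda>(t, z). if norm z \<le> t then of_real t * g (z / of_real t) else z)"

lemma alex_cont:
  assumes gc: "continuous_on disc g" and gim: "g ` disc \<subseteq> disc"
    and gfix: "\<And>z. z \<in> sphere 0 1 \<Longrightarrow> g z = z"
  shows "continuous_on ({0..1} \<times> disc) (alex g)"
proof -
  define A where "A x = of_real (fst x) * g (snd x / of_real (fst x))" for x :: "real \<times> complex"
  define S1 where "S1 = {x :: real \<times> complex. 0 \<le> fst x \<and> fst x \<le> 1 \<and> norm (snd x) \<le> fst x}"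
  define S2 where "S2 = {x :: real \<times> complex. 0 \<le> fst x \<and> fst x \<le> 1 \<and> norm (snd x) \<le> 1 \<and> fst x \<le> norm (snd x)}"
  have c1: "closed S1" unfolding S1_def
    by (intro closed_Collect_conj closed_Collect_le continuous_intros)
  have c2: "closed S2" unfolding S2_def
    by (intro closed_Collect_conj closed_Collect_le continuous_intros)
  have U: "{0..1} \<times> disc = S1 \<union> S2" unfolding S1_def S2_def by auto
  have E: "alex g = (\<lambda>x. if norm (snd x) \<le> fst x then A x else snd x)"
    unfolding alex_def A_def by (auto simp: fun_eq_iff)
  have nA: "norm (A x) \<le> fst x" if "x \<in> S1" for x
  proof (cases "fst x = 0")
    case True then show ?thesis unfolding A_def by simp
  next
    case False
    then have t: "fst x > 0" using that unfolding S1_def by simp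
    have "norm (snd x / of_real (fst x)) \<le> 1"
      using that t unfolding S1_def by (simp add: norm_divide divide_le_eq)
    then have "norm (g (snd x / of_real (fst x))) \<le> 1" using gim by (metis image_subset_iff mem_cball_0)
    then have "norm (A x) \<le> fst x * 1" unfolding A_def norm_mult using t
      by (simp add: mult_left_le)
    then show ?thesis by simp
  qed
  have cA: "continuous_on S1 A"
    unfolding continuous_on_eq_continuous_within
  proof
    fix x assume xS: "x \<in> S1"
    show "continuous (at x within S1) A"
    proof (cases "fst x = 0")
      case True
      then have z0: "snd x = 0" using xS unfolding S1_def by simp
      have Ax: "A x = 0" unfolding A_def using True by simp
      show ?thesis unfolding continuous_within_eps_delta
      proof (intro allI impI)
        fix e :: real assume e: "e > 0"
        show "\<exists>d>0. \<forall>x'\<in>S1. dist x' x < d \<longrightarrow> dist (A x') (A x) < e"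
        proof (intro exI[of _ e] conjI ballI impI e)
          fix x' assume x': "x' \<in> S1" "dist x' x < e"
          have "dist (A x') (A x) = norm (A x')" using Ax by simp
          also have "\<dots> \<le> fst x'" using nA[OF x'(1)] .
          also have "\<dots> = dist (fst x') (fst x)" using True x'(1) unfolding S1_def by (simp add: dist_real_def)
          also have "\<dots> \<le> dist x' x" by (rule dist_fst_le)
          finally show "dist (A x') (A x) < e" using x'(2) by simp
        qed
      qed
    next
      case False
      then have t: "fst x > 0" using xS unfolding S1_def by simp
      define S1' where "S1' = S1 \<inter> {x. fst x > 0}"
      have d: "continuous_on S1' (\<lambda>y. snd y / complex_of_real (fst y))"
        by (intro continuous_intros) (auto simp: S1'_def)
      have im: "(\<lambda>y. snd y / complex_of_real (fst y)) ` S1' \<subseteq> disc"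
        unfolding S1'_def S1_def by (auto simp: norm_divide divide_le_eq)
      have cg: "continuous_on S1' (\<lambda>y. g (snd y / complex_of_real (fst y)))"
        by (rule continuous_on_compose2[OF gc d im])
      have "continuous_on S1' A" unfolding A_def
        by (intro continuous_intros cg)
      moreover have "x \<in> S1'" using xS t unfolding S1'_def by simp
      ultimately have "continuous (at x within S1') A"
        using continuous_on_eq_continuous_within by blast
      moreover have "at x within S1 = at x within S1'"
        by (rule at_within_nhd[of x "{x. fst x > 0}"])
           (use t in \<open>auto simp: S1'_def intro!: open_Collect_less continuous_intros\<close>)
      ultimately show ?thesis by (simp add: continuous_within)
    qed
  qed
  have agree: "\<forall>x. (x \<in> S1 \<and> \<not> norm (snd x) \<le> fst x) \<or> (x \<in> S2 \<and> norm (snd x) \<le> fst x) \<longrightarrow> A x = snd x"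
  proof (intro allI impI)
    fix x assume "(x \<in> S1 \<and> \<not> norm (snd x) \<le> fst x) \<or> (x \<in> S2 \<and> norm (snd x) \<le> fst x)"
    then have x: "x \<in> S2" "norm (snd x) = fst x" unfolding S1_def S2_def by auto
    show "A x = snd x"
    proof (cases "fst x = 0")
      case True then show ?thesis using x unfolding A_def by simp
    next
      case False
      then have t: "fst x > 0" using x unfolding S2_def by simp
      have "snd x / of_real (fst x) \<in> sphere 0 1" using x t by (simp add: norm_divide)
      then have "g (snd x / of_real (fst x)) = snd x / of_real (fst x)" using gfix by blast
      then show ?thesis unfolding A_def using t by simp
    qed
  qed
  have "continuous_on (S1 \<union> S2) (\<lambda>x. if norm (snd x) \<le> fst x then A x else snd x)"
    by (rule continuous_on_cases[OF c1 c2 cA continuous_on_snd[OF continuous_on_id] agree])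
  then show ?thesis using U E by simp
qed

lemma alex_in:
  assumes gim: "g ` disc \<subseteq> disc" and t: "t \<in> {0..1}" and z: "z \<in> disc"
  shows "alex g (t, z) \<in> disc" and "norm z \<le> t \<Longrightarrow> norm (alex g (t, z)) \<le> t"
proof -
  have *: "norm (alex g (t, z)) \<le> t" if nz: "norm z \<le> t"
  proof (cases "t = 0")
    case True then show ?thesis using nz unfolding alex_def by simp
  next
    case False
    then have tp: "t > 0" using t by simp
    have "norm (z / of_real t) \<le> 1" using nz tp by (simp add: norm_divide divide_le_eq)
    then have "norm (g (z / of_real t)) \<le> 1" using gim by (metis image_subset_iff mem_cball_0)
    then have "norm (of_real t * g (z / of_real t)) \<le> t * 1" unfolding norm_mult using tp
      by (simp add: mult_left_le)
    then show ?thesis using nz unfolding alex_def by simp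
  qed
  then show "norm z \<le> t \<Longrightarrow> norm (alex g (t, z)) \<le> t" .
  show "alex g (t, z) \<in> disc"
  proof (cases "norm z \<le> t")
    case True then show ?thesis using * t by simp
  next
    case False then show ?thesis using z unfolding alex_def by simp
  qed
qed

lemma alex_inv:
  assumes gim: "g ` disc \<subseteq> disc" and gg: "\<And>z. z \<in> disc \<Longrightarrow> g' (g z) = z"
    and t: "t \<in> {0..1}" and z: "z \<in> disc"
  shows "alex g' (t, alex g (t, z)) = z"
proof (cases "norm z \<le> t")
  case True
  show ?thesis
  proof (cases "t = 0")
    case True then show ?thesis using \<open>norm z \<le> t\<close> unfolding alex_def by simp
  next
    case False
    then have tp: "t > 0" using t by simp
    have nw: "norm (alex g (t, z)) \<le> t" using alex_in(2)[OF gim t z True] .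
    have zd: "z / of_real t \<in> disc" using True tp by (simp add: norm_divide divide_le_eq)
    have w: "alex g (t, z) = of_real t * g (z / of_real t)" using True unfolding alex_def by simp
    have "alex g' (t, alex g (t, z)) = of_real t * g' (alex g (t, z) / of_real t)"
      using nw unfolding alex_def by (simp add: case_prod_beta)
    also have "alex g (t, z) / of_real t = g (z / of_real t)" using w tp by simp
    also have "g' (g (z / of_real t)) = z / of_real t" using gg zd by simp
    finally show ?thesis using tp by simp
  qed
next
  case False then show ?thesis unfolding alex_def by simp
qed

lemma alexander:
  assumes hom: "homeomorphism disc disc g g'" and gfix: "\<And>z. z \<in> sphere 0 1 \<Longrightarrow> g z = z"
  shows "disc_isotopy_from_id g (alex g)"
proof -
  have gc: "continuous_on disc g" and gim: "g ` disc \<subseteq> disc" and g'c: "continuous_on disc g'"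
    and g'im: "g' ` disc \<subseteq> disc" and gg: "\<And>z. z \<in> disc \<Longrightarrow> g' (g z) = z"
    and gg': "\<And>z. z \<in> disc \<Longrightarrow> g (g' z) = z"
    using hom unfolding homeomorphism_def by auto
  have g'fix: "g' z = z" if "z \<in> sphere 0 1" for z
    using gg[of z] gfix[OF that] that by simp
  have C: "continuous_on ({0..1} \<times> disc) (alex g)" by (rule alex_cont[OF gc gim gfix])
  have C': "continuous_on ({0..1} \<times> disc) (alex g')" by (rule alex_cont[OF g'c g'im g'fix])
  have "is_homeo (\<lambda>z. alex g (t, z))" if t: "t \<in> {0..1}" for t
    unfolding is_homeo_def
  proof (intro exI[of _ "\<lambda>z. alex g' (t, z)"])
    show "homeomorphism disc disc (\<lambda>z. alex g (t, z)) (\<lambda>z. alex g' (t, z))"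
      unfolding homeomorphism_def
    proof (intro conjI ballI)
      show "continuous_on disc (\<lambda>z. alex g (t, z))"
        by (rule continuous_on_compose2[OF C]) (use t in \<open>auto intro!: continuous_intros\<close>)
      show "continuous_on disc (\<lambda>z. alex g' (t, z))"
        by (rule continuous_on_compose2[OF C']) (use t in \<open>auto intro!: continuous_intros\<close>)
      show "alex g' (t, alex g (t, z)) = z" if "z \<in> disc" for z
        using alex_inv[OF gim gg t that] .
      show "alex g (t, alex g' (t, z)) = z" if "z \<in> disc" for z
        using alex_inv[OF g'im gg' t that] .
      show "(\<lambda>z. alex g (t, z)) ` disc = disc"
      proof
        show "(\<lambda>z. alex g (t, z)) ` disc \<subseteq> disc" using alex_in(1)[OF gim t] by blast
        show "disc \<subseteq> (\<lambda>z. alex g (t, z)) ` disc"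
        proof
          fix y assume y: "y \<in> disc"
          then have "y = alex g (t, alex g' (t, y))" using alex_inv[OF g'im gg' t y] by simp
          moreover have "alex g' (t, y) \<in> disc" using alex_in(1)[OF g'im t y] .
          ultimately show "y \<in> (\<lambda>z. alex g (t, z)) ` disc" by blast
        qed
      qed
      show "(\<lambda>z. alex g' (t, z)) ` disc = disc"
      proof
        show "(\<lambda>z. alex g' (t, z)) ` disc \<subseteq> disc" using alex_in(1)[OF g'im t] by blast
        show "disc \<subseteq> (\<lambda>z. alex g' (t, z)) ` disc"
        proof
          fix y assume y: "y \<in> disc"
          then have "y = alex g' (t, alex g (t, y))" using alex_inv[OF gim gg t y] by simp
          moreover have "alex g (t, y) \<in> disc" using alex_in(1)[OF gim t y] .
          ultimately show "y \<in> (\<lambda>z. alex g' (t, z)) ` disc" by blast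
        qed
      qed
    qed
  qed
  moreover have "alex g (0, z) = z" for z unfolding alex_def by simp
  moreover have "alex g (1, z) = g z" if "z \<in> disc" for z using that unfolding alex_def by simp
  ultimately show ?thesis unfolding disc_isotopy_from_id_def using C by auto
qed

lemma funpow_cong_on:
  assumes "g2 ` P \<subseteq> P" "\<And>p. p \<in> P \<Longrightarrow> g1 p = g2 p" "p \<in> P"
  shows "(g1^^m) p = (g2^^m) p"
proof (induction m)
  case (Suc m)
  have "(g2^^m) p \<in> P" using funpow_in[OF assms(1) assms(3)] .
  then show ?case using Suc assms(2) by simp
qed simp

theorem lemma3p3:
  fixes n :: nat and P :: "complex set" and f h k :: "complex \<Rightarrow> complex"
  assumes "n \<ge> 1"
    and "finite P" and "card P = n" and "P \<subseteq> ball 0 1"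
    and "braid_rep P f"
    and "mcg_rep P h" and "homeomorphism disc disc h k"
    and "orientation_reversing h"
    and "mcg_isotopic P (h \<circ> h) id"
  shows "closure_is_knot P (f \<circ> (h \<circ> f \<circ> k))
     \<longleftrightarrow> odd n \<and> is_full_cycle_on P (f \<circ> h)"
proof -
  note fin = assms(2)
  have ne: "P \<noteq> {}" using assms(1,3) by auto
  have sub: "P \<subseteq> disc" using assms(4) by auto
  have fh: "is_homeo f" and fP: "f ` P = P" and ffix: "\<And>z. z \<in> sphere 0 1 \<Longrightarrow> f z = z"
    using assms(5) by (simp_all add: braid_rep_def mcg_rep_def)
  obtain f' where ff: "homeomorphism disc disc f f'" using fh unfolding is_homeo_def by blast
  have hP: "h ` P = P" using assms(6) by (simp add: mcg_rep_def)
  note hk = assms(7)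
  have kh: "homeomorphism disc disc k h" using hk by (rule homeomorphism_symD)
  have kh_id: "\<And>x. x \<in> disc \<Longrightarrow> k (h x) = x" and hk_id: "\<And>y. y \<in> disc \<Longrightarrow> h (k y) = y"
    using hk unfolding homeomorphism_def by auto
  have ff_id: "\<And>x. x \<in> disc \<Longrightarrow> f' (f x) = x"
    using ff unfolding homeomorphism_def by auto
  define g where "g = f \<circ> (h \<circ> f \<circ> k)"
  define \<sigma> where "\<sigma> = f \<circ> h"
  obtain H :: "real \<times> complex \<Rightarrow> complex" where Hc: "continuous_on ({0..1} \<times> disc) H"
    and HP: "\<And>t. t \<in> {0..1} \<Longrightarrow> mcg_rep P (\<lambda>z. H (t, z))"
    and H01: "\<And>z. z \<in> disc \<Longrightarrow> H (0, z) = (h \<circ> h) z \<and> H (1, z) = id z"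
    using assms(9) unfolding mcg_isotopic_def by blast
  have hh: "h (h p) = p" if p: "p \<in> P" for p
  proof -
    have pd: "p \<in> disc" using p sub by blast
    have c: "continuous_on {0..1} (\<lambda>t. H (t, p))"
      by (rule continuous_on_compose2[OF Hc, of "{0..1}" "\<lambda>t. (t, p)"])
         (use pd in \<open>auto intro!: continuous_intros\<close>)
    have "(\<lambda>t. H (t, p)) ` {0..1} \<subseteq> P"
      using HP p unfolding mcg_rep_def by blast
    then have "finite ((\<lambda>t. H (t, p)) ` {0..1})" using fin finite_subset by blast
    then have "(\<lambda>t. H (t, p)) constant_on {0..1}"
      by (rule continuous_finite_range_constant[OF connected_Icc c])
    then have "H (0, p) = H (1, p)" unfolding constant_on_def by force
    then show ?thesis using H01[OF pd] by simp
  qed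
  have kP: "k p = h p" if p: "p \<in> P" for p
  proof -
    have "h p \<in> disc" using hP p sub by blast
    then have "k (h (h p)) = h p" using kh_id by blast
    then show ?thesis using hh[OF p] by simp
  qed
  have \<sigma>P: "\<sigma> ` P \<subseteq> P" unfolding \<sigma>_def using fP hP by auto
  have \<sigma>inj: "inj_on \<sigma> P"
  proof (rule inj_onI)
    fix x y assume xy: "x \<in> P" "y \<in> P" "\<sigma> x = \<sigma> y"
    have "h x \<in> disc" "h y \<in> disc" using xy hP sub by blast+
    then have "h x = h y" using xy ff_id unfolding \<sigma>_def by (metis comp_apply)
    then show "x = y" using xy kh_id sub by (metis subsetD)
  qed
  have g\<sigma>: "g p = (\<sigma> \<circ> \<sigma>) p" if "p \<in> P" for p
    using kP[OF that] unfolding g_def \<sigma>_def by simp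
  have \<sigma>\<sigma>P: "(\<sigma> \<circ> \<sigma>) ` P \<subseteq> P" using \<sigma>P by auto
  have gP: "g ` P \<subseteq> P" using g\<sigma> \<sigma>\<sigma>P by auto
  have ginj: "inj_on g P"
    using \<sigma>inj \<sigma>P g\<sigma> unfolding inj_on_def by (metis comp_apply image_subset_iff)
  have sorb_eq: "sorb P g \<longleftrightarrow> sorb P (\<sigma> \<circ> \<sigma>)"
  proof -
    have eq: "\<And>p m. p \<in> P \<Longrightarrow> (g^^m) p = ((\<sigma> \<circ> \<sigma>)^^m) p"
      by (rule funpow_cong_on[OF \<sigma>\<sigma>P g\<sigma>])
    show ?thesis unfolding sorb_def by (metis eq)
  qed
  have "homeomorphism disc disc (f \<circ> k) (h \<circ> f')"
    using homeomorphism_compose[OF kh ff] .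
  then have "homeomorphism disc disc (h \<circ> (f \<circ> k)) ((h \<circ> f') \<circ> k)"
    using homeomorphism_compose[OF _ hk] by blast
  then have "homeomorphism disc disc (f \<circ> (h \<circ> (f \<circ> k))) (((h \<circ> f') \<circ> k) \<circ> f')"
    using homeomorphism_compose[OF _ ff] by blast
  then obtain g' where gg: "homeomorphism disc disc g g'"
    unfolding g_def by (auto simp: o_assoc)
  have gfix: "g z = z" if z: "z \<in> sphere 0 1" for z
  proof -
    have ks: "k z \<in> sphere 0 1" by (rule homeo_sphere[OF hk z])
    have "g z = f (h (k z))" unfolding g_def using ffix[OF ks] by simp
    also have "h (k z) = z" using hk_id z by simp
    finally show ?thesis using ffix[OF z] by simp
  qed
  have iso: "disc_isotopy_from_id g (alex g)" by (rule alexander[OF gg gfix])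
  have knot: "closure_is_knot P g \<longleftrightarrow> sorb P g"
  proof
    assume "closure_is_knot P g"
    then have "connected (closed_braid P (alex g))"
      using iso unfolding closure_is_knot_def by blast
    then show "sorb P g" using braid_conn[OF fin sub ne iso gP ginj] by blast
  next
    assume so: "sorb P g"
    show "closure_is_knot P g" unfolding closure_is_knot_def
    proof (intro allI impI conjI)
      fix H' assume iso': "disc_isotopy_from_id g H'"
      show "connected (closed_braid P H')" using braid_conn[OF fin sub ne iso' gP ginj] so by blast
      show "closed_braid P H' \<noteq> {}" using ne unfolding closed_braid_def by auto
    qed
  qed
  show ?thesis
    unfolding g_def[symmetric] knot sorb_eq sq_orbit[OF fin ne \<sigma>P \<sigma>inj]
      full_cycle_iff[OF fin ne \<sigma>P \<sigma>inj, folded \<sigma>_def] \<sigma>_def[symmetric] assms(3)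
    by simp
qed

end
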